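(* In the two-player zero-sum setting and algorithm SBMM described in the context, for every $h\in[H]$, $s\in\mathcal{S}$ and any fixed vectors $\underline{V}_{h+1},\overline{V}_{h+1}\in\mathbb{R}^{\mathcal{S}}$, the function $(\mu,\nu)\mapsto\underline{V}_h^{\mu,\nu}(s)$ on $\Delta(\mathcal{A})\times\Delta(\mathcal{B})$ is concave in $\mu$ for each fixed $\nu$ and concave in $\nu$ for each fixed $\mu$, and the function $(\mu,\nu)\mapsto\overline{V}_h^{\mu,\nu}(s)$ is convex in $\mu$ for each fixed $\nu$ and convex in $\nu$ for each fixed $\mu$.
   Context: Two-player zero-sum episodic Markov game: finite state space $\mathcal{S}$ ($|\mathcal{S}|=S$), max-player actions $\mathcal{A}$ ($|\mathcal{A}|=A$), min-player actions $\mathcal{B}$ ($|\mathcal{B}|=B$), horizon $H$. Offline dataset $\mathcal{D}=\{(s_h^k,a_h^k,b_h^k,r_h^k,s_{h+1}^k)\}_{h\in[H],k\in[n]}$. Let $n_h(s,a,b)=\#\{k:(s_h^k,a_h^k,b_h^k)=(s,a,b)\}$, $\mathcal{K}_h(s)=\{(a,b):n_h(s,a,b)\neq0\}$; for $n_h(s,a,b)>0$, $\widehat{r}_h(s,a,b)$ is the average of $r_h^k$ and $\widehat{P}_h(s'|s,a,b)$ the empirical frequency of $s_{h+1}^k=s'$ over those $k$; otherwise both are $0$. $\mathcal{N}(\Pi)>0$ is a fixed number (a covering number of a strategy class) and $\iota=32\log(2ABSHn/\delta)$. The bonus is $b_h(s,\mu,\nu)=H\sqrt{\sum_{(a,b)\in\mathcal{K}_h(s)}\frac{\mu(a)^2\nu(b)^2}{n_h(s,a,b)}\log(\mathcal{N}(\Pi))\iota}+\sqrt{\iota}/n$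 for $\mu\in\Delta(\mathcal{A}),\nu\in\Delta(\mathcal{B})$. Define $\underline{Q}_h(s,a,b)=\widehat{r}_h(s,a,b)+\sum_{s'}\widehat{P}_h(s'|s,a,b)\underline{V}_{h+1}(s')$, $\underline{V}_h^{\mu,\nu}(s)=\sum_{a,b}\mu(a)\nu(b)\underline{Q}_h(s,a,b)-b_h(s,\mu,\nu)$, $\overline{Q}_h(s,a,b)=\widehat{r}_h(s,a,b)+\sum_{s'}\widehat{P}_h(s'|s,a,b)\overline{V}_{h+1}(s')+H\mathbf{1}\{(a,b)\notin\mathcal{K}_h(s)\}$, $\overline{V}_h^{\mu,\nu}(s)=\sum_{a,b}\mu(a)\nu(b)\overline{Q}_h(s,a,b)+b_h(s,\mu,\nu)$. *)

theory Defs
  imports "HOL-Analysis.Analysis"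
begin

(* Offline dataset: D k h = (s_h^k, a_h^k, b_h^k, r_h^k, s_{h+1}^k), for k < n (episodes)
   and h in {1..H}. States, max-actions, min-actions are finite types. *)
type_synonym ('s,'a,'b) dataset = "nat \<Rightarrow> nat \<Rightarrow> ('s \<times> 'a \<times> 'b \<times> real \<times> 's)"

definition dstate :: "('s \<times> 'a \<times> 'b \<times> real \<times> 's) \<Rightarrow> 's" where "dstate t = fst t"
definition dact :: "('s \<times> 'a \<times> 'b \<times> real \<times> 's) \<Rightarrow> 'a" where "dact t = fst (snd t)"
definition dbct :: "('s \<times> 'a \<times> 'b \<times> real \<times> 's) \<Rightarrow> 'b" where "dbct t = fst (snd (snd t))"
definition drew :: "('s \<times> 'a \<times> 'b \<times> real \<times> 's) \<Rightarrow> real" where "drew t = fst (snd (snd (snd t)))"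
definition dnext :: "('s \<times> 'a \<times> 'b \<times> real \<times> 's) \<Rightarrow> 's" where "dnext t = snd (snd (snd (snd t)))"

definition visits :: "('s,'a,'b) dataset \<Rightarrow> nat \<Rightarrow> nat \<Rightarrow> 's \<Rightarrow> 'a \<Rightarrow> 'b \<Rightarrow> nat set" where
  "visits D n h s a b = {k \<in> {..<n}. dstate (D k h) = s \<and> dact (D k h) = a \<and> dbct (D k h) = b}"

definition cnt :: "('s,'a,'b) dataset \<Rightarrow> nat \<Rightarrow> nat \<Rightarrow> 's \<Rightarrow> 'a \<Rightarrow> 'b \<Rightarrow> nat" where
  "cnt D n h s a b = card (visits D n h s a b)"

definition Kset :: "('s,'a,'b) dataset \<Rightarrow> nat \<Rightarrow> nat \<Rightarrow> 's \<Rightarrow> ('a \<times> 'b) set" where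
  "Kset D n h s = {(a,b). cnt D n h s a b \<noteq> 0}"

definition rhat :: "('s,'a,'b) dataset \<Rightarrow> nat \<Rightarrow> nat \<Rightarrow> 's \<Rightarrow> 'a \<Rightarrow> 'b \<Rightarrow> real" where
  "rhat D n h s a b = (if cnt D n h s a b = 0 then 0
     else (\<Sum>k\<in>visits D n h s a b. drew (D k h)) / real (cnt D n h s a b))"

definition Phat :: "('s,'a,'b) dataset \<Rightarrow> nat \<Rightarrow> nat \<Rightarrow> 's \<Rightarrow> 'a \<Rightarrow> 'b \<Rightarrow> 's \<Rightarrow> real" where
  "Phat D n h s a b s' = (if cnt D n h s a b = 0 then 0
     else real (card {k \<in> visits D n h s a b. dnext (D k h) = s'}) / real (cnt D n h s a b))"

definition iota :: "'s itself \<Rightarrow> 'a itself \<Rightarrow> 'b itself \<Rightarrow> nat \<Rightarrow> nat \<Rightarrow> real \<Rightarrow> real" where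
  "iota _ _ _ H n \<delta> = 32 * ln (2 * real CARD('a) * real CARD('b) * real CARD('s) * real H * real n / \<delta>)"

(* bonus b_h(s,mu,nu); NPi is the covering number N(Pi) *)
definition bonus :: "('s::finite,'a::finite,'b::finite) dataset \<Rightarrow> nat \<Rightarrow> nat \<Rightarrow> real \<Rightarrow> nat \<Rightarrow> nat \<Rightarrow> 's
     \<Rightarrow> real^'a \<Rightarrow> real^'b \<Rightarrow> real" where
  "bonus D n H \<delta> NPi h s \<mu> \<nu> =
     (let \<iota> = iota TYPE('s) TYPE('a) TYPE('b) H n \<delta> in
      real H * sqrt ((\<Sum>(a,b)\<in>Kset D n h s. (\<mu>$a)^2 * (\<nu>$b)^2 / real (cnt D n h s a b))
                      * ln (real NPi) * \<iota>) + sqrt \<iota> / real n)"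

definition Qlow :: "('s::finite,'a,'b) dataset \<Rightarrow> nat \<Rightarrow> nat \<Rightarrow> ('s \<Rightarrow> real) \<Rightarrow> 's \<Rightarrow> 'a \<Rightarrow> 'b \<Rightarrow> real" where
  "Qlow D n h Vnext s a b = rhat D n h s a b + (\<Sum>s'\<in>UNIV. Phat D n h s a b s' * Vnext s')"

definition Qup :: "('s::finite,'a,'b) dataset \<Rightarrow> nat \<Rightarrow> nat \<Rightarrow> nat \<Rightarrow> ('s \<Rightarrow> real) \<Rightarrow> 's \<Rightarrow> 'a \<Rightarrow> 'b \<Rightarrow> real" where
  "Qup D n H h Vnext s a b = rhat D n h s a b + (\<Sum>s'\<in>UNIV. Phat D n h s a b s' * Vnext s')
      + real H * (if (a,b) \<notin> Kset D n h s then 1 else 0)"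

definition Vlow :: "('s::finite,'a::finite,'b::finite) dataset \<Rightarrow> nat \<Rightarrow> nat \<Rightarrow> real \<Rightarrow> nat \<Rightarrow> nat
     \<Rightarrow> ('s \<Rightarrow> real) \<Rightarrow> 's \<Rightarrow> real^'a \<Rightarrow> real^'b \<Rightarrow> real" where
  "Vlow D n H \<delta> NPi h Vnext s \<mu> \<nu> =
     (\<Sum>a\<in>UNIV. \<Sum>b\<in>UNIV. \<mu>$a * \<nu>$b * Qlow D n h Vnext s a b) - bonus D n H \<delta> NPi h s \<mu> \<nu>"

definition Vup :: "('s::finite,'a::finite,'b::finite) dataset \<Rightarrow> nat \<Rightarrow> nat \<Rightarrow> real \<Rightarrow> nat \<Rightarrow> nat
     \<Rightarrow> ('s \<Rightarrow> real) \<Rightarrow> 's \<Rightarrow> real^'a \<Rightarrow> real^'b \<Rightarrow> real" where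
  "Vup D n H \<delta> NPi h Vnext s \<mu> \<nu> =
     (\<Sum>a\<in>UNIV. \<Sum>b\<in>UNIV. \<mu>$a * \<nu>$b * Qup D n H h Vnext s a b) + bonus D n H \<delta> NPi h s \<mu> \<nu>"

definition prob_simplex :: "(real^'a::finite) set" where
  "prob_simplex = {p. (\<forall>i. 0 \<le> p$i) \<and> (\<Sum>i\<in>UNIV. p$i) = 1}"

end

theory Submission
  imports Defs
begin

lemma cvx_gen:
  fixes S :: "(real^'a::finite) set" and p :: "'k \<Rightarrow> 'a" and f :: "real^'a \<Rightarrow> real"
  assumes S: "convex S" and r: "0 \<le> r"
    and f: "\<And>x. f x = (\<Sum>i\<in>UNIV. x$i * c i) + r * L2_set (\<lambda>k. x$(p k) * g k) K + d"
  shows "convex_on S f"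
proof (rule convex_onI[OF _ S])
  fix t :: real and x y :: "real^'a"
  assume t: "0 < t" "t < 1"
  have lin: "(\<Sum>i\<in>UNIV. ((1 - t) *\<^sub>R x + t *\<^sub>R y)$i * c i)
      = (1 - t) * (\<Sum>i\<in>UNIV. x$i * c i) + t * (\<Sum>i\<in>UNIV. y$i * c i)"
    by (simp add: sum_distrib_left sum.distrib[symmetric] sum_subtractf[symmetric] algebra_simps)
  have "L2_set (\<lambda>k. ((1 - t) *\<^sub>R x + t *\<^sub>R y)$(p k) * g k) K
      = L2_set (\<lambda>k. (1 - t) * (x$(p k) * g k) + t * (y$(p k) * g k)) K"
    by (rule L2_set_cong) (auto simp: algebra_simps)
  also have "\<dots> \<le> L2_set (\<lambda>k. (1 - t) * (x$(p k) * g k)) K + L2_set (\<lambda>k. t * (y$(p k) * g k)) K"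
    by (rule L2_set_triangle_ineq)
  also have "\<dots> = (1 - t) * L2_set (\<lambda>k. x$(p k) * g k) K + t * L2_set (\<lambda>k. y$(p k) * g k) K"
    using t by (simp add: L2_set_right_distrib)
  finally have L: "L2_set (\<lambda>k. ((1 - t) *\<^sub>R x + t *\<^sub>R y)$(p k) * g k) K
      \<le> (1 - t) * L2_set (\<lambda>k. x$(p k) * g k) K + t * L2_set (\<lambda>k. y$(p k) * g k) K" .
  have "r * L2_set (\<lambda>k. ((1 - t) *\<^sub>R x + t *\<^sub>R y)$(p k) * g k) K
      \<le> r * ((1 - t) * L2_set (\<lambda>k. x$(p k) * g k) K + t * L2_set (\<lambda>k. y$(p k) * g k) K)"
    using mult_left_mono[OF L r] .
  then show "f ((1 - t) *\<^sub>R x + t *\<^sub>R y) \<le> (1 - t) * f x + t * f y"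
    unfolding f lin by (simp add: algebra_simps)
qed

lemma convex_simplex: "convex (prob_simplex :: (real^'a::finite) set)"
  unfolding convex_def prob_simplex_def
  by (auto simp: sum.distrib sum_distrib_left[symmetric])


lemma bonus_mu:
  assumes "0 \<le> Lc"
  shows "sqrt ((\<Sum>(a,b)\<in>K. (\<mu>$a)^2 * (\<nu>$b)^2 / real (C a b)) * Lc)
       = L2_set (\<lambda>k. \<mu>$(fst k) * sqrt ((\<nu>$(snd k))^2 / real (C (fst k) (snd k)) * Lc)) K"
  unfolding L2_set_def sum_distrib_right
  by (rule arg_cong[where f=sqrt], rule sum.cong)
     (use assms in \<open>auto simp: power_mult_distrib\<close>)

lemma bonus_nu:
  assumes "0 \<le> Lc"
  shows "sqrt ((\<Sum>(a,b)\<in>K. (\<mu>$a)^2 * (\<nu>$b)^2 / real (C a b)) * Lc)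
       = L2_set (\<lambda>k. \<nu>$(snd k) * sqrt ((\<mu>$(fst k))^2 / real (C (fst k) (snd k)) * Lc)) K"
  unfolding L2_set_def sum_distrib_right
  by (rule arg_cong[where f=sqrt], rule sum.cong)
     (use assms in \<open>auto simp: power_mult_distrib\<close>)

theorem proposition2:
  fixes D :: "('s::finite,'a::finite,'b::finite) dataset"
    and n H h NPi :: nat and \<delta> :: real
    and VlowNext VupNext :: "'s \<Rightarrow> real" and s :: 's
  assumes "0 < n" and "0 < NPi" and "0 < \<delta>" and "\<delta> < 1"
    and "1 \<le> h" and "h \<le> H"
  shows "(\<forall>\<nu>\<in>prob_simplex. concave_on prob_simplex (\<lambda>\<mu>. Vlow D n H \<delta> NPi h VlowNext s \<mu> \<nu>))
       \<and> (\<forall>\<mu>\<in>prob_simplex. concave_on prob_simplex (\<lambda>\<nu>. Vlow D n H \<delta> NPi h VlowNext s \<mu> \<nu>))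
       \<and> (\<forall>\<nu>\<in>prob_simplex. convex_on prob_simplex (\<lambda>\<mu>. Vup D n H \<delta> NPi h VupNext s \<mu> \<nu>))
       \<and> (\<forall>\<mu>\<in>prob_simplex. convex_on prob_simplex (\<lambda>\<nu>. Vup D n H \<delta> NPi h VupNext s \<mu> \<nu>))"
proof -
  define \<iota> where "\<iota> = iota TYPE('s) TYPE('a) TYPE('b) H n \<delta>"
  define Lc where "Lc = ln (real NPi) * \<iota>"
  define K where "K = Kset D n h s"
  define C where "C = cnt D n h s"
  have cA: "real CARD('a) \<ge> 1" and cB: "real CARD('b) \<ge> 1" and cS: "real CARD('s) \<ge> 1"
    by (simp_all add: Suc_le_eq)
  have "1 \<le> 2 * real CARD('a) * real CARD('b) * real CARD('s) * real H * real n"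
  proof -
    have "1 \<le> real CARD('a) * real CARD('b)" using cA cB
      by (metis mult_mono' mult_1 zero_le_one)
    then have "1 \<le> real CARD('a) * real CARD('b) * real CARD('s)" using cS
      by (metis mult_mono' mult_1 zero_le_one)
    moreover have "1 \<le> real H * real n"
    proof -
      have "1 \<le> real H" "1 \<le> real n" using assms by auto
      then show ?thesis by (metis mult_mono' mult_1 zero_le_one)
    qed
    ultimately have "1 \<le> (real CARD('a) * real CARD('b) * real CARD('s)) * (real H * real n)"
      by (metis mult_mono' mult_1 zero_le_one)
    then show ?thesis by (simp add: mult.assoc)
  qed
  then have "1 \<le> 2 * real CARD('a) * real CARD('b) * real CARD('s) * real H * real n / \<delta>"
    using assms by (simp add: le_divide_eq)
  then have i0: "0 \<le> \<iota>" unfolding \<iota>_def iota_def by simp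
  have L0: "0 \<le> Lc" unfolding Lc_def using i0 assms by simp
  have H0: "0 \<le> real H" by simp
  have bon1: "\<And>\<mu> \<nu>. bonus D n H \<delta> NPi h s \<mu> \<nu> = real H * L2_set (\<lambda>k. \<mu>$(fst k) * sqrt ((\<nu>$(snd k))^2 / real (C (fst k) (snd k)) * Lc)) K + sqrt \<iota> / real n"
    unfolding bonus_def Let_def \<iota>_def[symmetric] mult.assoc[of "_ * _" "ln _", symmetric]
    using bonus_mu[OF L0, where K=K and C=C] unfolding Lc_def K_def C_def by (simp add: mult.assoc)
  have bon2: "\<And>\<mu> \<nu>. bonus D n H \<delta> NPi h s \<mu> \<nu> = real H * L2_set (\<lambda>k. \<nu>$(snd k) * sqrt ((\<mu>$(fst k))^2 / real (C (fst k) (snd k)) * Lc)) K + sqrt \<iota> / real n"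
    unfolding bonus_def Let_def \<iota>_def[symmetric]
    using bonus_nu[OF L0, where K=K and C=C] unfolding Lc_def K_def C_def by (simp add: mult.assoc)
  have swap: "\<And>(\<mu>::real^'a) (\<nu>::real^'b) Q. (\<Sum>a\<in>UNIV. \<Sum>b\<in>UNIV. \<mu>$a * \<nu>$b * Q a b)
      = (\<Sum>b\<in>UNIV. \<nu>$b * (\<Sum>a\<in>UNIV. \<mu>$a * Q a b))"
    by (subst sum.swap) (simp add: sum_distrib_left algebra_simps)
  have lin1: "\<And>(\<mu>::real^'a) (\<nu>::real^'b) Q. (\<Sum>a\<in>UNIV. \<Sum>b\<in>UNIV. \<mu>$a * \<nu>$b * Q a b)
      = (\<Sum>a\<in>UNIV. \<mu>$a * (\<Sum>b\<in>UNIV. \<nu>$b * Q a b))"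
    by (simp add: sum_distrib_left algebra_simps)
  show ?thesis
  proof (intro conjI ballI)
    fix \<nu> :: "real^'b"
    show "concave_on prob_simplex (\<lambda>\<mu>. Vlow D n H \<delta> NPi h VlowNext s \<mu> \<nu>)"
      unfolding concave_on_def
      by (rule cvx_gen[OF convex_simplex H0, where c="\<lambda>a. - (\<Sum>b\<in>UNIV. \<nu>$b * Qlow D n h VlowNext s a b)"
            and d="sqrt \<iota> / real n" and p=fst and K=K and g="\<lambda>k. sqrt ((\<nu>$(snd k))^2 / real (C (fst k) (snd k)) * Lc)"])
        (simp add: Vlow_def bon1 lin1 sum_negf)
  next
    fix \<mu> :: "real^'a"
    show "concave_on prob_simplex (\<lambda>\<nu>. Vlow D n H \<delta> NPi h VlowNext s \<mu> \<nu>)"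
      unfolding concave_on_def
      by (rule cvx_gen[OF convex_simplex H0, where c="\<lambda>b. - (\<Sum>a\<in>UNIV. \<mu>$a * Qlow D n h VlowNext s a b)"
            and d="sqrt \<iota> / real n" and p=snd and K=K and g="\<lambda>k. sqrt ((\<mu>$(fst k))^2 / real (C (fst k) (snd k)) * Lc)"])
        (simp only: Vlow_def bon2 swap, simp add: sum_negf)
  next
    fix \<nu> :: "real^'b"
    show "convex_on prob_simplex (\<lambda>\<mu>. Vup D n H \<delta> NPi h VupNext s \<mu> \<nu>)"
      by (rule cvx_gen[OF convex_simplex H0, where c="\<lambda>a. (\<Sum>b\<in>UNIV. \<nu>$b * Qup D n H h VupNext s a b)"
            and d="sqrt \<iota> / real n" and p=fst and K=K and g="\<lambda>k. sqrt ((\<nu>$(snd k))^2 / real (C (fst k) (snd k)) * Lc)"])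
        (simp add: Vup_def bon1 lin1)
  next
    fix \<mu> :: "real^'a"
    show "convex_on prob_simplex (\<lambda>\<nu>. Vup D n H \<delta> NPi h VupNext s \<mu> \<nu>)"
      by (rule cvx_gen[OF convex_simplex H0, where c="\<lambda>b. (\<Sum>a\<in>UNIV. \<mu>$a * Qup D n H h VupNext s a b)"
            and d="sqrt \<iota> / real n" and p=snd and K=K and g="\<lambda>k. sqrt ((\<mu>$(fst k))^2 / real (C (fst k) (snd k)) * Lc)"])
        (unfold Vup_def bon2 swap, simp)
  qed
qed

end
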